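(* Let $\Phi\in C^1(\mathbb{R})$ be convex. Then for every real-valued function $f$ on $\mathbb{R}^d$ for which the quantities below are defined, \[ \Phi'(f)\,Lf-L\Phi(f)\ge0\quad\text{pointwise}, \] where $L=\ln(I-\Delta)$.
   Context: $L=\ln(I-\Delta)$ is the Fourier multiplier with symbol $\ln(1+|\xi|^2)$ (symbol of $-\Delta$ identified with $|\xi|^2$); equivalently, via the heat semigroup $e^{s\Delta}$ (convolution with the heat kernel $H(s,\cdot)$), $Lf(x)=\int_0^\infty\big(f(x)-e^{s\Delta}f(x)\big)e^{-s}\frac{ds}{s}$. *)

theory Defs
  imports "HOL-Analysis.Analysis"
begin

definition heat_kernel :: "real \<Rightarrow> 'a::euclidean_space \<Rightarrow> real" where
  "heat_kernel s z = (4 * pi * s) powr (- real DIM('a) / 2) * exp (- (norm z)\<^sup>2 / (4 * s))"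

definition heat_sg :: "real \<Rightarrow> ('a::euclidean_space \<Rightarrow> real) \<Rightarrow> 'a \<Rightarrow> real" where
  "heat_sg s f x = (\<integral>y. heat_kernel s (x - y) * f y \<partial>lborel)"

text \<open>L = ln(I - Delta): L f (x) = integral over (0,oo) of (f(x) - e^{s Delta} f(x)) e^{-s} ds/s.\<close>
definition logL :: "('a::euclidean_space \<Rightarrow> real) \<Rightarrow> 'a \<Rightarrow> real" where
  "logL f x = (LINT s:{0<..}|lborel. (f x - heat_sg s f x) * exp (- s) / s)"

text \<open>"The quantities defining L f (x) are defined": all the integrals exist.\<close>
definition logL_defined :: "('a::euclidean_space \<Rightarrow> real) \<Rightarrow> 'a \<Rightarrow> bool" where
  "logL_defined f x \<longleftrightarrow>
     (\<forall>s>0. integrable lborel (\<lambda>y. heat_kernel s (x - y) * f y)) \<and>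
     set_integrable lborel {0<..} (\<lambda>s. (f x - heat_sg s f x) * exp (- s) / s)"

end

theory Submission imports Defs "HOL-Probability.Distributions" begin

lemma heat_kernel_prod:
  fixes x y :: "'a::euclidean_space"
  assumes s: "s > 0"
  shows "heat_kernel s (x - y) = (\<Prod>b\<in>Basis. normal_density (x \<bullet> b) (sqrt (2 * s)) (y \<bullet> b))"
proof -
  have n0: "(norm (x - y))\<^sup>2 = (\<Sum>b\<in>Basis. ((x - y) \<bullet> b) * ((x - y) \<bullet> b))"
    unfolding power2_norm_eq_inner by (subst euclidean_inner) (rule refl)
  have n: "(norm (x - y))\<^sup>2 = (\<Sum>b\<in>Basis. ((y \<bullet> b) - (x \<bullet> b))\<^sup>2)"
    unfolding n0 by (intro sum.cong refl) (simp add: inner_diff_left power2_eq_square algebra_simps)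
  have "(\<Prod>b\<in>Basis. normal_density (x \<bullet> b) (sqrt (2 * s)) (y \<bullet> b))
     = (\<Prod>b\<in>Basis. (1 / sqrt (4 * pi * s)) * exp (- ((y \<bullet> b) - (x \<bullet> b))\<^sup>2 / (4 * s)))"
    using s by (intro prod.cong refl) (simp add: normal_density_def)
  also have "\<dots> = (1 / sqrt (4 * pi * s)) ^ DIM('a) * exp (\<Sum>b\<in>Basis. - ((y \<bullet> b) - (x \<bullet> b))\<^sup>2 / (4 * s))"
    by (simp only: prod.distrib prod_constant exp_sum[OF finite_Basis])
  also have "(\<Sum>b\<in>Basis. - ((y \<bullet> b) - (x \<bullet> b))\<^sup>2 / (4 * s)) = - (norm (x - y))\<^sup>2 / (4 * s)"
    by (simp add: n sum_divide_distrib sum_negf)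
  also have "(1 / sqrt (4 * pi * s)) ^ DIM('a) = (4 * pi * s) powr (- real DIM('a) / 2)"
  proof -
    have A: "4 * pi * s > 0" using s by simp
    have "1 / sqrt (4 * pi * s) = (4 * pi * s) powr (- (1/2))"
    proof -
      have "(4 * pi * s) powr (- (1/2)) = inverse (sqrt (4 * pi * s))"
        by (simp only: powr_minus powr_half_sqrt[OF less_imp_le[OF A]])
      then show ?thesis by (simp only: inverse_eq_divide)
    qed
    have A0: "4 * pi * s \<noteq> 0" using A by linarith
    have "(1 / sqrt (4 * pi * s)) ^ DIM('a) = (4 * pi * s) powr (real DIM('a) * (- (1/2)))"
      unfolding \<open>1 / sqrt (4 * pi * s) = (4 * pi * s) powr (- (1/2))\<close> by (rule powr_power[OF A0])
    then show ?thesis by simp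
  qed
  finally show ?thesis unfolding heat_kernel_def by simp
qed

lemma heat_kernel_nonneg: "s > 0 \<Longrightarrow> heat_kernel s z \<ge> 0"
  unfolding heat_kernel_def by simp

lemma heat_kernel_integral:
  fixes x :: "'a::euclidean_space"
  assumes s: "s > 0"
  shows "has_bochner_integral lborel (\<lambda>y. heat_kernel s (x - y)) 1"
proof (rule has_bochner_integral_nn_integral)
  show "(\<lambda>y. heat_kernel s (x - y)) \<in> borel_measurable lborel"
    unfolding heat_kernel_def by measurable
  show "AE y in lborel. 0 \<le> heat_kernel s (x - y)"
    using s heat_kernel_nonneg by auto
  have one: "(\<integral>\<^sup>+t. ennreal (normal_density m (sqrt (2 * s)) t) \<partial>lborel) = 1" for m
  proof -
    have sp: "sqrt (2 * s) > 0" using s by simp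
    show ?thesis
      by (subst nn_integral_eq_integral) (auto simp: integrable_normal_density[OF sp] integral_normal_density[OF sp])
  qed
  have "(\<integral>\<^sup>+y. ennreal (heat_kernel s (x - y)) \<partial>lborel)
      = (\<integral>\<^sup>+y. (\<Prod>b\<in>Basis. ennreal (normal_density (x \<bullet> b) (sqrt (2 * s)) (y \<bullet> b))) \<partial>lborel)"
    using s by (intro nn_integral_cong) (simp add: heat_kernel_prod prod_ennreal)
  also have "\<dots> = (\<Prod>b\<in>Basis. (\<integral>\<^sup>+t. ennreal (normal_density (x \<bullet> b) (sqrt (2 * s)) t) \<partial>lborel))"
    by (rule nn_integral_lborel_prod) auto
  also have "\<dots> = 1" by (simp add: one)
  finally show "(\<integral>\<^sup>+y. ennreal (heat_kernel s (x - y)) \<partial>lborel) = ennreal 1" by simp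
qed simp

theorem lemma4p3:
  fixes \<Phi> :: "real \<Rightarrow> real" and f :: "'a::euclidean_space \<Rightarrow> real" and x :: 'a
  assumes "\<And>t. \<Phi> differentiable (at t)"
    and "continuous_on UNIV (deriv \<Phi>)"
    and "convex_on UNIV \<Phi>"
    and "logL_defined f x"
    and "logL_defined (\<lambda>y. \<Phi> (f y)) x"
  shows "deriv \<Phi> (f x) * logL f x - logL (\<lambda>y. \<Phi> (f y)) x \<ge> 0"
proof -
  define a where "a = f x"
  define c where "c = deriv \<Phi> a"
  have der: "(\<Phi> has_field_derivative c) (at a within UNIV)"
    unfolding c_def using assms(1) DERIV_deriv_iff_real_differentiable by blast
  have tan: "\<Phi> t - \<Phi> a \<ge> c * (t - a)" for t
    by (rule convex_on_imp_above_tangent[OF assms(3) _ _ _ der]) auto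
  have intf: "integrable lborel (\<lambda>y. heat_kernel s (x - y) * f y)" if "s > 0" for s
    using assms(4) that unfolding logL_defined_def by blast
  have intPf: "integrable lborel (\<lambda>y. heat_kernel s (x - y) * \<Phi> (f y))" if "s > 0" for s
    using assms(5) that unfolding logL_defined_def by blast
  have sif: "set_integrable lborel {0<..} (\<lambda>s. (f x - heat_sg s f x) * exp (- s) / s)"
    using assms(4) unfolding logL_defined_def by blast
  have siPf: "set_integrable lborel {0<..} (\<lambda>s. (\<Phi> (f x) - heat_sg s (\<lambda>y. \<Phi> (f y)) x) * exp (- s) / s)"
    using assms(5) unfolding logL_defined_def by blast
  have pt: "c * ((f x - heat_sg s f x) * exp (- s) / s)
      - (\<Phi> (f x) - heat_sg s (\<lambda>y. \<Phi> (f y)) x) * exp (- s) / s \<ge> 0" if s: "s > 0" for s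
  proof -
    have H: "has_bochner_integral lborel (\<lambda>y. heat_kernel s (x - y)) 1"
      using heat_kernel_integral[OF s] .
    have intH: "integrable lborel (\<lambda>y. heat_kernel s (x - y))"
      using H by (simp add: has_bochner_integral_iff)
    have intH1: "(\<integral>y. heat_kernel s (x - y) \<partial>lborel) = 1"
      using H by (simp add: has_bochner_integral_iff)
    have eq: "(\<integral>y. heat_kernel s (x - y) * (\<Phi> (f y) - \<Phi> a - c * (f y - a)) \<partial>lborel)
        = heat_sg s (\<lambda>y. \<Phi> (f y)) x - c * heat_sg s f x - (\<Phi> a - c * a)"
    proof -
      have "(\<lambda>y. heat_kernel s (x - y) * (\<Phi> (f y) - \<Phi> a - c * (f y - a)))
          = (\<lambda>y. heat_kernel s (x - y) * \<Phi> (f y) - c * (heat_kernel s (x - y) * f y)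
                 - (\<Phi> a - c * a) * heat_kernel s (x - y))"
        by (auto simp: algebra_simps)
      moreover have "(\<integral>y. heat_kernel s (x - y) * \<Phi> (f y) - c * (heat_kernel s (x - y) * f y)
                 - (\<Phi> a - c * a) * heat_kernel s (x - y) \<partial>lborel)
          = heat_sg s (\<lambda>y. \<Phi> (f y)) x - c * heat_sg s f x - (\<Phi> a - c * a)"
        using intf[OF s] intPf[OF s] intH intH1 unfolding heat_sg_def
        by (simp add: Bochner_Integration.integral_diff)
      ultimately show ?thesis by simp
    qed
    have "(\<integral>y. heat_kernel s (x - y) * (\<Phi> (f y) - \<Phi> a - c * (f y - a)) \<partial>lborel) \<ge> 0"
      by (rule Bochner_Integration.integral_nonneg)
         (use tan heat_kernel_nonneg[OF s] in \<open>auto intro!: mult_nonneg_nonneg\<close>)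
    then have "heat_sg s (\<lambda>y. \<Phi> (f y)) x - c * heat_sg s f x - (\<Phi> a - c * a) \<ge> 0"
      using eq by linarith
    then have "c * (f x - heat_sg s f x) - (\<Phi> (f x) - heat_sg s (\<lambda>y. \<Phi> (f y)) x) \<ge> 0"
      using eq unfolding a_def by (simp add: algebra_simps)
    then have "(c * (f x - heat_sg s f x) - (\<Phi> (f x) - heat_sg s (\<lambda>y. \<Phi> (f y)) x)) * (exp (- s) / s) \<ge> 0"
      using s by simp
    moreover have "c * ((f x - heat_sg s f x) * exp (- s) / s)
      - (\<Phi> (f x) - heat_sg s (\<lambda>y. \<Phi> (f y)) x) * exp (- s) / s
      = (c * (f x - heat_sg s f x) - (\<Phi> (f x) - heat_sg s (\<lambda>y. \<Phi> (f y)) x)) * (exp (- s) / s)"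
      by (simp add: algebra_simps diff_divide_distrib)
    ultimately show ?thesis by simp
  qed
  have "deriv \<Phi> (f x) * logL f x - logL (\<lambda>y. \<Phi> (f y)) x
     = (LINT s:{0<..}|lborel. c * ((f x - heat_sg s f x) * exp (- s) / s)
          - (\<Phi> (f x) - heat_sg s (\<lambda>y. \<Phi> (f y)) x) * exp (- s) / s)"
  proof -
    have m: "set_integrable lborel {0<..} (\<lambda>s. c * ((f x - heat_sg s f x) * exp (- s) / s))"
      using sif by (intro set_integrable_mult_right)
    have r: "c * (LINT s:{0<..}|lborel. (f x - heat_sg s f x) * exp (- s) / s)
        = (LINT s:{0<..}|lborel. c * ((f x - heat_sg s f x) * exp (- s) / s))"
      by (rule set_integral_mult_right[symmetric])
    have "c * logL f x - logL (\<lambda>y. \<Phi> (f y)) x = (LINT s:{0<..}|lborel. c * ((f x - heat_sg s f x) * exp (- s) / s)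
          - (\<Phi> (f x) - heat_sg s (\<lambda>y. \<Phi> (f y)) x) * exp (- s) / s)"
      unfolding logL_def r by (rule set_integral_diff(2)[OF m siPf, symmetric])
    then show ?thesis unfolding c_def a_def .
  qed
  also have "\<dots> \<ge> 0"
    unfolding set_lebesgue_integral_def
    by (rule Bochner_Integration.integral_nonneg) (use pt in \<open>auto simp: indicator_def\<close>)
  finally show ?thesis .
qed

end
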